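(* Let $K\in\mathcal S_2\setminus\{\emptyset,\mathbb R^2\}$ and $u\in S^1$. Then the Steiner symmetral $S_u(K)$ of $K$ in direction $u$ also belongs to $\mathcal S_2$.
   Context: $B(x,r)$ is the closed Euclidean disk. $\mathcal S_2$ is the class of all sets of the form $\bigcap_{x\in A}B(x,1)$ for $A\subseteq\mathbb R^2$. For a convex body $L$ and $u\in S^{1}$, the Steiner symmetral is $S_u(L)=\{x+tu:\ x\in P_{u^\perp}L,\ |t|\le\tfrac{b(x)-a(x)}2\}$, where $L\cap(x+\mathbb Ru)=[x+a(x)u,x+b(x)u]$. *)

theory Defs
  imports "HOL-Analysis.Analysis"
begin

definition S2 :: "(real^2) set set" where
  "S2 = {K. \<exists>A. K = (\<Inter>x\<in>A. cball x 1)}"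

definition proj_perp :: "real^2 \<Rightarrow> real^2 \<Rightarrow> real^2" where
  "proj_perp u y = y - (y \<bullet> u) *\<^sub>R u"

definition chord_lo :: "(real^2) set \<Rightarrow> real^2 \<Rightarrow> real^2 \<Rightarrow> real" where
  "chord_lo L u x = Inf {t. x + t *\<^sub>R u \<in> L}"

definition chord_hi :: "(real^2) set \<Rightarrow> real^2 \<Rightarrow> real^2 \<Rightarrow> real" where
  "chord_hi L u x = Sup {t. x + t *\<^sub>R u \<in> L}"

definition steiner_sym :: "real^2 \<Rightarrow> (real^2) set \<Rightarrow> (real^2) set" where
  "steiner_sym u L = {x + t *\<^sub>R u | x t. x \<in> proj_perp u ` L \<and>
      \<bar>t\<bar> \<le> (chord_hi L u x - chord_lo L u x) / 2}"

end

theory Submission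
  imports Defs
begin

definition ww :: "real \<Rightarrow> real" where "ww y = sqrt (1 - y\<^sup>2)"
definition FF :: "real \<Rightarrow> real" where "FF y = y / sqrt (1 - y\<^sup>2)"
definition GG :: "real \<Rightarrow> real" where "GG z = z / sqrt (1 + z\<^sup>2)"

lemma deriv_eqI:
  assumes "(f has_real_derivative D) F" "D = E" shows "(f has_real_derivative E) F"
  using assms(1) by (simp only: assms(2))

lemma sqrt_chain:
  assumes "0 < g y" "(g has_real_derivative g') (at y)"
  shows "((\<lambda>x. sqrt (g x)) has_real_derivative (g' / (2 * sqrt (g y)))) (at y)"
proof (rule deriv_eqI[OF DERIV_chain2[OF DERIV_real_sqrt[OF assms(1)] assms(2)]])
  have "sqrt (g y) > 0" using assms(1) by simp
  then show "inverse (sqrt (g y)) / 2 * g' = g' / (2 * sqrt (g y))"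
    by (simp add: field_simps)
qed

lemma ww_deriv:
  assumes "\<bar>y\<bar> < 1"
  shows "(ww has_real_derivative (- FF y)) (at y)"
proof -
  have p: "0 < 1 - y\<^sup>2" using assms by (simp add: abs_square_less_1)
  have d1: "((\<lambda>y. 1 - y\<^sup>2) has_real_derivative (-2*y)) (at y)"
    by (auto intro!: derivative_eq_intros)
  show ?thesis unfolding ww_def[abs_def] FF_def
    by (rule deriv_eqI[OF sqrt_chain[of "\<lambda>y. 1 - y\<^sup>2", OF p d1]]) simp
qed

lemma FF_deriv:
  assumes "\<bar>y\<bar> < 1"
  shows "(FF has_real_derivative (1 / (sqrt (1 - y\<^sup>2))^3)) (at y)"
proof -
  have p: "0 < 1 - y\<^sup>2" using assms by (simp add: abs_square_less_1)
  have d1: "((\<lambda>y. 1 - y\<^sup>2) has_real_derivative (-2*y)) (at y)"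
    by (auto intro!: derivative_eq_intros)
  note d2 = sqrt_chain[of "\<lambda>y. 1 - y\<^sup>2", OF p d1]
  have s: "sqrt (1 - y\<^sup>2) ^ 2 = 1 - y\<^sup>2" using p by simp
  have sp: "sqrt (1 - y\<^sup>2) > 0" using p by simp
  show ?thesis unfolding FF_def[abs_def]
    apply (rule deriv_eqI[OF DERIV_divide[OF DERIV_ident d2]])
    using sp apply simp
    using sp s by (simp add: divide_simps power3_eq_cube) (simp add: algebra_simps power2_eq_square)
qed

lemma GG_deriv:
  shows "(GG has_real_derivative (1 / (sqrt (1 + z\<^sup>2))^3)) (at z)"
proof -
  have p: "0 < 1 + z\<^sup>2" by (simp add: add_pos_nonneg)
  have d1: "((\<lambda>y. 1 + y\<^sup>2) has_real_derivative (2*z)) (at z)"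
    by (auto intro!: derivative_eq_intros)
  note d2 = sqrt_chain[of "\<lambda>y. 1 + y\<^sup>2", OF p d1]
  have s: "sqrt (1 + z\<^sup>2) ^ 2 = 1 + z\<^sup>2" using p by simp
  have sp: "sqrt (1 + z\<^sup>2) > 0" using p by simp
  show ?thesis unfolding GG_def[abs_def]
    apply (rule deriv_eqI[OF DERIV_divide[OF DERIV_ident d2]])
    using sp apply simp
    using sp s by (simp add: divide_simps power3_eq_cube) (simp add: algebra_simps power2_eq_square)
qed

lemma sq_lt1: "\<bar>y::real\<bar> < 1 \<Longrightarrow> 0 < 1 - y\<^sup>2"
  by (simp add: abs_square_less_1)

lemma GG_FF: assumes "\<bar>y\<bar> < 1" shows "GG (FF y) = y"
proof -
  have p: "0 < 1 - y\<^sup>2" using assms by (rule sq_lt1)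
  have sp: "sqrt (1 - y\<^sup>2) > 0" using p by simp
  have s: "sqrt (1 - y\<^sup>2) ^ 2 = 1 - y\<^sup>2" using p by simp
  have "1 + (FF y)\<^sup>2 = 1 / (1 - y\<^sup>2)" unfolding FF_def using p s
    by (simp add: power_divide field_simps)
  then have "sqrt (1 + (FF y)\<^sup>2) = 1 / sqrt (1 - y\<^sup>2)" by (simp add: real_sqrt_divide)
  then show ?thesis unfolding GG_def using sp by (simp add: FF_def)
qed

lemma N_FF: assumes "\<bar>y\<bar> < 1" shows "sqrt (1 + (FF y)\<^sup>2) = 1 / sqrt (1 - y\<^sup>2)"
proof -
  have p: "0 < 1 - y\<^sup>2" using assms by (rule sq_lt1)
  have s: "sqrt (1 - y\<^sup>2) ^ 2 = 1 - y\<^sup>2" using p by simp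
  have "1 + (FF y)\<^sup>2 = 1 / (1 - y\<^sup>2)" unfolding FF_def using p s
    by (simp add: power_divide field_simps)
  then show ?thesis by (simp add: real_sqrt_divide)
qed

lemma GG_bound: "\<bar>GG z\<bar> < 1"
proof -
  have sp: "sqrt (1 + z\<^sup>2) > 0" by (simp add: add_pos_nonneg)
  have "\<bar>z\<bar> < sqrt (1 + z\<^sup>2)" by (rule real_less_rsqrt) simp
  then show ?thesis unfolding GG_def using sp by (simp add: abs_div)
qed

lemma FF_GG: "FF (GG z) = z"
proof -
  have sp: "sqrt (1 + z\<^sup>2) > 0" by (simp add: add_pos_nonneg)
  have s: "sqrt (1 + z\<^sup>2) ^ 2 = 1 + z\<^sup>2" by (simp add: add_pos_nonneg)
  have "1 - (GG z)\<^sup>2 = 1 / (1 + z\<^sup>2)" unfolding GG_def using sp s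
    by (simp add: power_divide field_simps)
  then have "sqrt (1 - (GG z)\<^sup>2) = 1 / sqrt (1 + z\<^sup>2)" by (simp add: real_sqrt_divide)
  then show ?thesis unfolding FF_def using sp by (simp add: GG_def)
qed

lemma GG_strict: "a < b \<Longrightarrow> GG a < GG b"
  apply (rule DERIV_pos_imp_increasing[of a b GG])
   apply simp
  using GG_deriv by (metis add_pos_nonneg real_sqrt_gt_0_iff zero_less_divide_1_iff zero_less_one zero_le_power2 zero_less_power)

lemma GG_mono: "a \<le> b \<Longrightarrow> GG a \<le> GG b"
  using GG_strict by (cases "a = b") (auto simp: order_le_less)

lemma FF_mono: assumes "\<bar>a\<bar> < 1" "\<bar>b\<bar> < 1" "a \<le> b" shows "FF a \<le> FF b"
proof (rule ccontr)
  assume "\<not> FF a \<le> FF b"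
  then have "GG (FF b) < GG (FF a)" by (intro GG_strict) simp
  then show False using assms by (simp add: GG_FF)
qed

lemma FF_odd: "FF (- y) = - FF y" by (simp add: FF_def)
lemma GG_odd: "GG (- y) = - GG y" by (simp add: GG_def)
lemma ww_even: "ww (- y) = ww y" by (simp add: ww_def)

lemma cube_convex:
  fixes p q :: real assumes "0 \<le> p" "0 \<le> q"
  shows "((p + q) / 2) ^ 3 \<le> (p ^ 3 + q ^ 3) / 2"
proof -
  have "(p ^ 3 + q ^ 3) / 2 - ((p + q) / 2) ^ 3 = 3 / 8 * (p + q) * (p - q)\<^sup>2"
    by (simp add: power2_eq_square power3_eq_cube field_simps)
  moreover have "3 / 8 * (p + q) * (p - q)\<^sup>2 \<ge> 0" using assms by simp
  ultimately show ?thesis by linarith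
qed

lemma N_convex:
  fixes a b :: real
  shows "sqrt (1 + ((a + b) / 2)\<^sup>2) ^ 3 \<le> (sqrt (1 + a\<^sup>2) ^ 3 + sqrt (1 + b\<^sup>2) ^ 3) / 2"
proof -
  have cs: "1 + a * b \<le> sqrt ((1 + a\<^sup>2) * (1 + b\<^sup>2))"
  proof (rule real_le_rsqrt)
    have "(1 + a\<^sup>2) * (1 + b\<^sup>2) - (1 + a * b)\<^sup>2 = (a - b)\<^sup>2"
      by (simp add: power2_eq_square algebra_simps)
    then show "(1 + a * b)\<^sup>2 \<le> (1 + a\<^sup>2) * (1 + b\<^sup>2)"
      by (metis diff_ge_0_iff_ge zero_le_power2)
  qed
  have m: "sqrt (1 + ((a + b) / 2)\<^sup>2) \<le> (sqrt (1 + a\<^sup>2) + sqrt (1 + b\<^sup>2)) / 2"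
  proof (rule real_le_lsqrt)
    show "0 \<le> (sqrt (1 + a\<^sup>2) + sqrt (1 + b\<^sup>2)) / 2" by simp
    define A where "A = sqrt (1 + a\<^sup>2)"
    define B where "B = sqrt (1 + b\<^sup>2)"
    have A2: "A\<^sup>2 = 1 + a\<^sup>2" unfolding A_def by (simp add: add_nonneg_nonneg)
    have B2: "B\<^sup>2 = 1 + b\<^sup>2" unfolding B_def by (simp add: add_nonneg_nonneg)
    have AB: "A * B = sqrt ((1 + a\<^sup>2) * (1 + b\<^sup>2))" unfolding A_def B_def by (simp add: real_sqrt_mult)
    have e0: "((A + B) / 2)\<^sup>2 = (A\<^sup>2 + B\<^sup>2 + 2 * (A * B)) / 4"
      by (simp add: power2_eq_square field_simps)
    have e: "((sqrt (1 + a\<^sup>2) + sqrt (1 + b\<^sup>2)) / 2)\<^sup>2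
       = (2 + a\<^sup>2 + b\<^sup>2 + 2 * sqrt ((1 + a\<^sup>2) * (1 + b\<^sup>2))) / 4"
      using e0 unfolding A2 B2 AB by (simp add: A_def B_def)
    show "1 + ((a + b) / 2)\<^sup>2 \<le> ((sqrt (1 + a\<^sup>2) + sqrt (1 + b\<^sup>2)) / 2)\<^sup>2"
      unfolding e using cs by (simp add: power2_eq_square field_simps)
  qed
  have "sqrt (1 + ((a + b) / 2)\<^sup>2) ^ 3 \<le> ((sqrt (1 + a\<^sup>2) + sqrt (1 + b\<^sup>2)) / 2) ^ 3"
    by (rule power_mono[OF m]) simp
  also have "\<dots> \<le> (sqrt (1 + a\<^sup>2) ^ 3 + sqrt (1 + b\<^sup>2) ^ 3) / 2"
    by (rule cube_convex) simp_all
  finally show ?thesis .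
qed

lemma FF_shift_deriv:
  assumes "\<bar>t + c\<bar> < 1"
  shows "((\<lambda>t. FF (t + c)) has_real_derivative (sqrt (1 + (FF (t + c))\<^sup>2) ^ 3)) (at t)"
proof -
  have d: "((\<lambda>t. t + c) has_real_derivative 1) (at t)" by (auto intro!: derivative_eq_intros)
  have "1 / sqrt (1 - (t + c)\<^sup>2) ^ 3 = sqrt (1 + (FF (t + c))\<^sup>2) ^ 3"
    using N_FF[OF assms] by (simp add: power_one_over)
  then show ?thesis using DERIV_chain2[OF FF_deriv[OF assms] d] by simp
qed

lemma inner_ineq:
  assumes a: "\<bar>\<alpha>\<bar> < 1" "\<bar>\<beta>\<bar> < 1" and X: "0 \<le> X" "X + \<alpha> < 1" "X + \<beta> < 1"
  shows "FF (X + GG ((FF \<alpha> + FF \<beta>) / 2)) \<le> (FF (X + \<alpha>) + FF (X + \<beta>)) / 2"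
proof -
  define m where "m t = (FF (t + \<alpha>) + FF (t + \<beta>)) / 2" for t
  define \<phi> where "\<phi> t = GG (m t) - t" for t
  have "\<phi> 0 \<le> \<phi> X"
  proof (rule DERIV_nonneg_imp_nondecreasing[OF X(1)])
    fix t assume t: "0 \<le> t" "t \<le> X"
    have ta: "\<bar>t + \<alpha>\<bar> < 1" "\<bar>t + \<beta>\<bar> < 1" using a X t by auto
    define z1 where "z1 = FF (t + \<alpha>)"
    define z2 where "z2 = FF (t + \<beta>)"
    have dm: "(m has_real_derivative (sqrt (1 + z1\<^sup>2) ^ 3 + sqrt (1 + z2\<^sup>2) ^ 3) / 2) (at t)"
      unfolding m_def[abs_def] z1_def z2_def
      by (intro DERIV_cdivide DERIV_add FF_shift_deriv ta)
    have mt: "m t = (z1 + z2) / 2" by (simp add: m_def z1_def z2_def)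
    have d: "(\<phi> has_real_derivative
        (1 / sqrt (1 + ((z1 + z2) / 2)\<^sup>2) ^ 3) * ((sqrt (1 + z1\<^sup>2) ^ 3 + sqrt (1 + z2\<^sup>2) ^ 3) / 2) - 1) (at t)"
      unfolding \<phi>_def[abs_def]
      using DERIV_diff[OF DERIV_chain2[OF GG_deriv dm] DERIV_ident] mt by simp
    have pos: "0 < sqrt (1 + ((z1 + z2) / 2)\<^sup>2) ^ 3" by (simp add: add_pos_nonneg)
    have "1 / sqrt (1 + ((z1 + z2) / 2)\<^sup>2) ^ 3 * ((sqrt (1 + z1\<^sup>2) ^ 3 + sqrt (1 + z2\<^sup>2) ^ 3) / 2) - 1 \<ge> 0"
      using N_convex[of z1 z2] pos by (simp add: field_simps)
    then show "\<exists>y. (\<phi> has_real_derivative y) (at t) \<and> 0 \<le> y" using d by blast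
  qed
  then have le: "X + GG ((FF \<alpha> + FF \<beta>) / 2) \<le> GG (m X)" by (simp add: \<phi>_def m_def)
  have "\<bar>X + GG ((FF \<alpha> + FF \<beta>) / 2)\<bar> < 1"
    using le GG_bound[of "m X"] GG_bound[of "(FF \<alpha> + FF \<beta>) / 2"] X(1) by (auto simp: abs_less_iff)
  then have "FF (X + GG ((FF \<alpha> + FF \<beta>) / 2)) \<le> FF (GG (m X))"
    using FF_mono le GG_bound by blast
  then show ?thesis by (simp add: FF_GG m_def)
qed

lemma gamma_between:
  assumes "\<bar>\<alpha>\<bar> < 1" "\<bar>\<beta>\<bar> < 1"
  shows "min \<alpha> \<beta> \<le> GG ((FF \<alpha> + FF \<beta>) / 2)" "GG ((FF \<alpha> + FF \<beta>) / 2) \<le> max \<alpha> \<beta>"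
proof -
  have "FF (min \<alpha> \<beta>) \<le> (FF \<alpha> + FF \<beta>) / 2" "(FF \<alpha> + FF \<beta>) / 2 \<le> FF (max \<alpha> \<beta>)"
    using FF_mono[of \<alpha> \<beta>] FF_mono[of \<beta> \<alpha>] assms by (auto simp: min_def max_def)
  then have "GG (FF (min \<alpha> \<beta>)) \<le> GG ((FF \<alpha> + FF \<beta>) / 2)" "GG ((FF \<alpha> + FF \<beta>) / 2) \<le> GG (FF (max \<alpha> \<beta>))"
    by (auto intro: GG_mono)
  moreover have "\<bar>min \<alpha> \<beta>\<bar> < 1" "\<bar>max \<alpha> \<beta>\<bar> < 1" using assms by auto
  ultimately show "min \<alpha> \<beta> \<le> GG ((FF \<alpha> + FF \<beta>) / 2)" "GG ((FF \<alpha> + FF \<beta>) / 2) \<le> max \<alpha> \<beta>"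
    by (simp_all add: GG_FF)
qed

lemma ww_shift_deriv:
  assumes "\<bar>t + c\<bar> < 1"
  shows "((\<lambda>t. ww (t + c)) has_real_derivative (- FF (t + c))) (at t)"
proof -
  have d: "((\<lambda>t. t + c) has_real_derivative 1) (at t)" by (auto intro!: derivative_eq_intros)
  show ?thesis using DERIV_chain2[OF ww_deriv[OF assms] d] by simp
qed

lemma outer_ineq:
  assumes a: "\<bar>\<alpha>\<bar> < 1" "\<bar>\<beta>\<bar> < 1" and X: "0 \<le> X" "X + \<alpha> \<le> 1" "X + \<beta> \<le> 1"
  shows "(ww (X + \<alpha>) + ww (X + \<beta>)) / 2 - (ww \<alpha> + ww \<beta>) / 2
         \<le> ww (X + GG ((FF \<alpha> + FF \<beta>) / 2)) - ww (GG ((FF \<alpha> + FF \<beta>) / 2))"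
proof -
  define \<gamma> where "\<gamma> = GG ((FF \<alpha> + FF \<beta>) / 2)"
  have gb: "min \<alpha> \<beta> \<le> \<gamma>" "\<gamma> \<le> max \<alpha> \<beta>" using gamma_between[OF a] by (simp_all add: \<gamma>_def)
  define g where "g t = ww (t + \<gamma>) - (ww (t + \<alpha>) + ww (t + \<beta>)) / 2" for t
  have "g 0 \<le> g X"
  proof (rule DERIV_nonneg_imp_increasing_open[OF X(1)])
    fix t assume t: "0 < t" "t < X"
    have ta: "\<bar>t + \<alpha>\<bar> < 1" "\<bar>t + \<beta>\<bar> < 1" "\<bar>t + \<gamma>\<bar> < 1"
      using a X t gb by (auto simp: min_def max_def split: if_splits)
    have d: "(g has_real_derivative (- FF (t + \<gamma>) - (- FF (t + \<alpha>) + - FF (t + \<beta>)) / 2)) (at t)"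
      unfolding g_def[abs_def]
      by (intro DERIV_diff DERIV_cdivide DERIV_add ww_shift_deriv ta)
    have "FF (t + \<gamma>) \<le> (FF (t + \<alpha>) + FF (t + \<beta>)) / 2"
      unfolding \<gamma>_def using inner_ineq[OF a] t X by simp
    then show "\<exists>y. (g has_real_derivative y) (at t) \<and> 0 \<le> y" using d by (intro exI[of _ _]) auto
  next
    show "continuous_on {0..X} g" unfolding g_def[abs_def] ww_def by (intro continuous_intros) auto
  qed
  then show ?thesis by (simp add: g_def \<gamma>_def)
qed

lemma tangent_ineq:
  assumes a: "\<bar>\<alpha>\<bar> < 1" "\<bar>\<beta>\<bar> < 1" and X: "\<bar>X + \<alpha>\<bar> \<le> 1" "\<bar>X + \<beta>\<bar> \<le> 1"
  shows "\<bar>X + GG ((FF \<alpha> + FF \<beta>) / 2)\<bar> \<le> 1"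
    "(ww (X + \<alpha>) + ww (X + \<beta>)) / 2 - (ww \<alpha> + ww \<beta>) / 2
         \<le> ww (X + GG ((FF \<alpha> + FF \<beta>) / 2)) - ww (GG ((FF \<alpha> + FF \<beta>) / 2))"
proof -
  have gb: "min \<alpha> \<beta> \<le> GG ((FF \<alpha> + FF \<beta>) / 2)" "GG ((FF \<alpha> + FF \<beta>) / 2) \<le> max \<alpha> \<beta>"
    using gamma_between[OF a] by simp_all
  then show "\<bar>X + GG ((FF \<alpha> + FF \<beta>) / 2)\<bar> \<le> 1" using X by (auto simp: min_def max_def abs_le_iff split: if_splits)
  show "(ww (X + \<alpha>) + ww (X + \<beta>)) / 2 - (ww \<alpha> + ww \<beta>) / 2
         \<le> ww (X + GG ((FF \<alpha> + FF \<beta>) / 2)) - ww (GG ((FF \<alpha> + FF \<beta>) / 2))"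
  proof (cases "0 \<le> X")
    case True
    then show ?thesis using outer_ineq[OF a True] X by (simp add: abs_le_iff)
  next
    case False
    have a': "\<bar>-\<alpha>\<bar> < 1" "\<bar>-\<beta>\<bar> < 1" using a by simp_all
    define g where "g = GG ((FF \<alpha> + FF \<beta>) / 2)"
    have gm: "GG ((FF (-\<alpha>) + FF (-\<beta>)) / 2) = - g"
    proof -
      have "(FF (-\<alpha>) + FF (-\<beta>)) / 2 = - ((FF \<alpha> + FF \<beta>) / 2)" by (simp add: FF_odd field_simps)
      then show ?thesis using GG_odd[of "(FF \<alpha> + FF \<beta>) / 2"] by (simp only: g_def)
    qed
    have o: "(ww (-X + -\<alpha>) + ww (-X + -\<beta>)) / 2 - (ww (-\<alpha>) + ww (-\<beta>)) / 2
         \<le> ww (-X + GG ((FF (-\<alpha>) + FF (-\<beta>)) / 2)) - ww (GG ((FF (-\<alpha>) + FF (-\<beta>)) / 2))"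
      by (rule outer_ineq[OF a']) (use False X in \<open>auto simp: abs_le_iff\<close>)
    have e1: "ww (-X + -\<alpha>) = ww (X + \<alpha>)" by (metis minus_add_distrib ww_even)
    have e2: "ww (-X + -\<beta>) = ww (X + \<beta>)" by (metis minus_add_distrib ww_even)
    have e3: "ww (-X + - g) = ww (X + g)" by (metis minus_add_distrib ww_even)
    have e4: "ww (- g) = ww g" by (rule ww_even)
    have e5: "ww (-\<alpha>) = ww \<alpha>" "ww (-\<beta>) = ww \<beta>" by (rule ww_even)+
    have "(ww (X + \<alpha>) + ww (X + \<beta>)) / 2 - (ww \<alpha> + ww \<beta>) / 2 \<le> ww (X + g) - ww g"
      using o unfolding gm e1 e2 e3 e4 e5 .
    then show ?thesis by (simp only: g_def)
  qed
qed

lemma ww_gamma_ge: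
  assumes a: "\<bar>\<alpha>\<bar> < 1" "\<bar>\<beta>\<bar> < 1"
  shows "min (ww \<alpha>) (ww \<beta>) \<le> ww (GG ((FF \<alpha> + FF \<beta>) / 2))"
proof -
  define \<gamma> where "\<gamma> = GG ((FF \<alpha> + FF \<beta>) / 2)"
  have gb: "min \<alpha> \<beta> \<le> \<gamma>" "\<gamma> \<le> max \<alpha> \<beta>" using gamma_between[OF a] by (simp_all add: \<gamma>_def)
  have "\<gamma>\<^sup>2 \<le> max (\<alpha>\<^sup>2) (\<beta>\<^sup>2)"
  proof -
    have "\<bar>\<gamma>\<bar> \<le> max \<bar>\<alpha>\<bar> \<bar>\<beta>\<bar>" using gb by (auto simp: min_def max_def split: if_splits)
    then have "\<bar>\<gamma>\<bar>\<^sup>2 \<le> (max \<bar>\<alpha>\<bar> \<bar>\<beta>\<bar>)\<^sup>2" by (rule power_mono) simp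
    then show ?thesis by (auto simp: max_def split: if_splits)
  qed
  then have "min (1 - \<alpha>\<^sup>2) (1 - \<beta>\<^sup>2) \<le> 1 - \<gamma>\<^sup>2" by (auto simp: min_def max_def)
  then have "sqrt (min (1 - \<alpha>\<^sup>2) (1 - \<beta>\<^sup>2)) \<le> sqrt (1 - \<gamma>\<^sup>2)" by simp
  then show ?thesis by (simp add: ww_def \<gamma>_def min_def split: if_splits)
qed

lemma support_lemma:
  fixes A :: "(real^2) set" and Q n k :: "real^2"
  defines "K \<equiv> (\<Inter>a\<in>A. cball a 1)"
  assumes Q: "Q \<in> K" and n: "norm n = 1" and hp: "\<forall>k\<in>K. (k - Q) \<bullet> n \<le> 0" and k: "k \<in> K"
  shows "dist k (Q - n) \<le> 1"
proof (rule ccontr)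
  assume "\<not> dist k (Q - n) \<le> 1"
  then have far: "1 < norm (k - Q + n)" by (simp add: dist_norm algebra_simps)
  define y where "y = k - Q"
  define Y where "Y = y \<bullet> y"
  define \<sigma> where "\<sigma> = - (y \<bullet> n)"
  have nn: "n \<bullet> n = 1" using n by (simp add: norm_eq_1)
  have "1 < (norm (y + n))\<^sup>2" using far by (simp add: y_def)
  then have "1 < Y + 2 * (y \<bullet> n) + 1"
    by (simp add: power2_norm_eq_inner inner_add_left inner_add_right inner_commute nn Y_def)
  then have Ys: "Y - 2 * \<sigma> > 0" by (simp add: \<sigma>_def)
  have \<sigma>0: "\<sigma> \<ge> 0" using hp k by (simp add: \<sigma>_def y_def)
  define \<delta> where "\<delta> = Y - 2 * \<sigma>"
  define E where "E = (\<sigma> + \<delta> / 4)\<^sup>2 + Y"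
  have Y0: "Y \<ge> 0" by (simp add: Y_def)
  have \<delta>0: "\<delta> > 0" using Ys by (simp add: \<delta>_def)
  have E0: "E > 0" using \<delta>0 \<sigma>0 Y0 unfolding E_def by (simp add: add_pos_nonneg)
  define lam where "lam = \<delta> / (2 * E)"
  define \<epsilon> where "\<epsilon> = lam * (\<sigma> + \<delta> / 4)"
  have lam0: "lam > 0" using \<delta>0 E0 by (simp add: lam_def)
  have lamE: "lam * E = \<delta> / 2" using E0 by (simp add: lam_def)
  have lam1: "lam \<le> 1"
  proof -
    have "\<delta> \<le> Y" using \<sigma>0 by (simp add: \<delta>_def)
    also have "Y \<le> 2 * E" using E0 Y0 by (simp add: E_def add_nonneg_nonneg)
    finally show ?thesis using E0 by (simp add: lam_def)
  qed
  have \<epsilon>0: "\<epsilon> \<ge> 0" using lam0 \<sigma>0 \<delta>0 by (simp add: \<epsilon>_def)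
  have key: "lam * (1 - lam) * Y = 2 * \<epsilon> + \<epsilon>\<^sup>2"
  proof -
    have "lam * (1 - lam) * Y - 2 * \<epsilon> - \<epsilon>\<^sup>2 = lam * (Y - 2 * \<sigma> - \<delta> / 2 - lam * E)"
      by (simp add: \<epsilon>_def E_def power2_eq_square algebra_simps)
    also have "\<dots> = 0"
    proof -
      have "Y - 2 * \<sigma> - \<delta> / 2 - lam * E = 0" using lamE unfolding \<delta>_def by (simp add: field_simps)
      then show ?thesis by simp
    qed
    finally show ?thesis by simp
  qed
  define z where "z = Q + lam *\<^sub>R y + \<epsilon> *\<^sub>R n"
  have zK: "z \<in> K"
  proof -
    have "dist a z \<le> 1" if a: "a \<in> A" for a
    proof -
      define g where "g = a - Q"
      have g1: "g \<bullet> g \<le> 1"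
      proof -
        have "norm g \<le> 1" using Q a by (simp add: K_def g_def dist_norm)
        then have "(norm g)\<^sup>2 \<le> 1" by (simp add: power_le_one)
        then show ?thesis by (simp add: power2_norm_eq_inner)
      qed
      have g2: "(g - y) \<bullet> (g - y) \<le> 1"
      proof -
        have "norm (g - y) \<le> 1" using k a by (simp add: K_def g_def y_def dist_norm)
        then have "(norm (g - y))\<^sup>2 \<le> 1" by (simp add: power_le_one)
        then show ?thesis by (simp add: power2_norm_eq_inner)
      qed
      define r where "r = g - lam *\<^sub>R y"
      have rr: "r \<bullet> r = (1 - lam) * (g \<bullet> g) + lam * ((g - y) \<bullet> (g - y)) - lam * (1 - lam) * Y"
        by (simp add: r_def Y_def inner_diff_left inner_diff_right inner_commute algebra_simps power2_eq_square)
      have "(1 - lam) * (g \<bullet> g) \<le> (1 - lam) * 1" using g1 lam1 by (intro mult_left_mono) simp_all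
      moreover have "lam * ((g - y) \<bullet> (g - y)) \<le> lam * 1" using g2 lam0 by (intro mult_left_mono) simp_all
      ultimately have rr1: "r \<bullet> r \<le> 1 - lam * (1 - lam) * Y" using rr by simp
      have "lam * (1 - lam) * Y \<ge> 0" using lam0 lam1 Y0 by simp
      then have "r \<bullet> r \<le> 1" using rr1 by simp
      then have "(norm r)\<^sup>2 \<le> 1" by (simp add: power2_norm_eq_inner)
      then have nr: "norm r \<le> 1" by (simp add: power_le_one_iff)
      have "\<bar>r \<bullet> n\<bar> \<le> norm r * norm n" by (rule Cauchy_Schwarz_ineq2)
      then have rn: "- (r \<bullet> n) \<le> 1" using nr n by simp
      have "(a - z) \<bullet> (a - z) = r \<bullet> r - 2 * \<epsilon> * (r \<bullet> n) + \<epsilon>\<^sup>2 * (n \<bullet> n)"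
        by (simp add: z_def r_def g_def inner_diff_left inner_diff_right inner_add_left inner_add_right
            inner_commute algebra_simps power2_eq_square)
      also have "\<dots> \<le> (1 - lam * (1 - lam) * Y) + 2 * \<epsilon> + \<epsilon>\<^sup>2"
      proof -
        have "- 2 * \<epsilon> * (r \<bullet> n) \<le> 2 * \<epsilon> * 1" using rn \<epsilon>0
          using mult_left_mono[OF rn, of "2 * \<epsilon>"] by simp
        then show ?thesis using rr1 nn by simp
      qed
      also have "\<dots> = 1" using key by simp
      finally have "(norm (a - z))\<^sup>2 \<le> 1" by (simp add: power2_norm_eq_inner)
      then show ?thesis by (simp add: dist_norm power_le_one_iff)
    qed
    then show ?thesis by (simp add: K_def)
  qed
  have "(z - Q) \<bullet> n = lam * (y \<bullet> n) + \<epsilon>" by (simp add: z_def inner_add_left nn)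
  also have "\<dots> = lam * \<delta> / 4" by (simp add: \<epsilon>_def \<sigma>_def algebra_simps)
  also have "\<dots> > 0" using lam0 \<delta>0 by simp
  finally show False using hp zK by force
qed

lemma perp_basis:
  fixes u :: "real^2" assumes u: "norm u = 1"
  obtains v where "v \<bullet> u = 0" "norm v = 1" "\<And>y. y = (y \<bullet> v) *\<^sub>R v + (y \<bullet> u) *\<^sub>R u"
proof -
  define v :: "real^2" where "v = (\<chi> i. if i = 1 then -(u$2) else u$1)"
  have v1: "v$1 = -(u$2)" and v2: "v$2 = u$1" by (simp_all add: v_def)
  have uu: "u$1 * u$1 + u$2 * u$2 = 1"
  proof -
    have "u \<bullet> u = 1" using u by (simp add: norm_eq_1)
    then show ?thesis by (simp add: inner_vec_def sum_2)
  qed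
  have "v \<bullet> u = 0" by (simp add: inner_vec_def sum_2 v1 v2)
  moreover have "norm v = 1"
  proof -
    have "v \<bullet> v = 1" using uu by (simp add: inner_vec_def sum_2 v1 v2 algebra_simps)
    then show ?thesis by (simp add: norm_eq_1)
  qed
  moreover have "y = (y \<bullet> v) *\<^sub>R v + (y \<bullet> u) *\<^sub>R u" for y :: "real^2"
  proof -
    have "y$1 = ((y \<bullet> v) *\<^sub>R v + (y \<bullet> u) *\<^sub>R u)$1"
    proof -
      have "((y \<bullet> v) *\<^sub>R v + (y \<bullet> u) *\<^sub>R u)$1 = y$1 * (u$1 * u$1 + u$2 * u$2)"
        by (simp add: inner_vec_def sum_2 v1 v2 algebra_simps)
      then show ?thesis using uu by simp
    qed
    moreover have "y$2 = ((y \<bullet> v) *\<^sub>R v + (y \<bullet> u) *\<^sub>R u)$2"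
    proof -
      have "((y \<bullet> v) *\<^sub>R v + (y \<bullet> u) *\<^sub>R u)$2 = y$2 * (u$1 * u$1 + u$2 * u$2)"
        by (simp add: inner_vec_def sum_2 v1 v2 algebra_simps)
      then show ?thesis using uu by simp
    qed
    ultimately show ?thesis by (simp add: vec_eq_iff forall_2)
  qed
  ultimately show ?thesis using that by blast
qed

locale stp =
  fixes A :: "(real^2) set" and u v :: "real^2"
  assumes Ane: "A \<noteq> {}" and u1: "norm u = 1" and v1: "norm v = 1" and vu: "v \<bullet> u = 0"
    and dec: "\<And>y. y = (y \<bullet> v) *\<^sub>R v + (y \<bullet> u) *\<^sub>R u"
    and Kne: "(\<Inter>a\<in>A. cball a 1) \<noteq> {}"
begin

abbreviation "KK \<equiv> (\<Inter>a\<in>A. cball a 1)"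
abbreviation "HH \<equiv> steiner_sym u KK"

lemma uu: "u \<bullet> u = 1" using u1 by (simp add: norm_eq_1)
lemma vv: "v \<bullet> v = 1" using v1 by (simp add: norm_eq_1)
lemma uv: "u \<bullet> v = 0" using vu by (simp add: inner_commute)

lemma proj_eq: "proj_perp u y = (y \<bullet> v) *\<^sub>R v"
proof -
  have "y - (y \<bullet> u) *\<^sub>R u = (y \<bullet> v) *\<^sub>R v" using dec[of y] by (metis add_diff_cancel_right')
  then show ?thesis by (simp add: proj_perp_def)
qed

lemma proj_u: "proj_perp u y \<bullet> u = 0" by (simp add: proj_eq vu)
lemma proj_v: "proj_perp u y \<bullet> v = y \<bullet> v" by (simp add: proj_eq vv)

lemma nsq: "(norm y)\<^sup>2 = (y \<bullet> v)\<^sup>2 + (y \<bullet> u)\<^sup>2"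
proof -
  have h: "(y \<bullet> v) *\<^sub>R v + (y \<bullet> u) *\<^sub>R u = y" using dec[of y] by (rule sym)
  have "y \<bullet> y = ((y \<bullet> v) *\<^sub>R v + (y \<bullet> u) *\<^sub>R u) \<bullet> y" unfolding h ..
  also have "\<dots> = (y \<bullet> v) * (v \<bullet> y) + (y \<bullet> u) * (u \<bullet> y)" by (simp add: inner_add_left)
  finally have e: "y \<bullet> y = (y \<bullet> v)\<^sup>2 + (y \<bullet> u)\<^sup>2" by (simp add: inner_commute power2_eq_square)
  show ?thesis unfolding power2_norm_eq_inner by (rule e)
qed

lemma dist_sq: "(dist a b)\<^sup>2 = (a \<bullet> v - b \<bullet> v)\<^sup>2 + (a \<bullet> u - b \<bullet> u)\<^sup>2"
  using nsq[of "a - b"] by (simp add: dist_norm inner_diff_left)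

lemma K_closed: "closed KK" by (intro closed_INT) auto

lemma K_bounded: "bounded KK"
proof -
  obtain a0 where "a0 \<in> A" using Ane by blast
  then have "KK \<subseteq> cball a0 1" by blast
  then show ?thesis using bounded_subset bounded_cball by blast
qed

lemma K_compact: "compact KK" using K_closed K_bounded by (simp add: compact_eq_bounded_closed)
lemma K_convex: "convex KK" by (intro convex_INT) auto

lemma ch_ne: "x \<in> proj_perp u ` KK \<Longrightarrow> \<exists>t. x + t *\<^sub>R u \<in> KK"
proof -
  assume "x \<in> proj_perp u ` KK"
  then obtain y where y: "y \<in> KK" "x = proj_perp u y" by blast
  then have "x + (y \<bullet> u) *\<^sub>R u = y" by (simp add: proj_perp_def)
  then show ?thesis using y(1) by metis
qed

lemma ch_bdd: assumes "x \<in> proj_perp u ` KK" shows "\<exists>B. \<forall>t. x + t *\<^sub>R u \<in> KK \<longrightarrow> \<bar>t\<bar> \<le> B"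
proof -
  obtain a0 where a0: "a0 \<in> A" using Ane by blast
  have xu: "x \<bullet> u = 0" using assms proj_u by auto
  have "\<bar>t\<bar> \<le> 1 + \<bar>a0 \<bullet> u\<bar>" if "x + t *\<^sub>R u \<in> KK" for t
  proof -
    have "dist a0 (x + t *\<^sub>R u) \<le> 1" using that a0 by auto
    then have "\<bar>(x + t *\<^sub>R u - a0) \<bullet> u\<bar> \<le> 1"
      using Cauchy_Schwarz_ineq2[of "x + t *\<^sub>R u - a0" u] u1 by (simp add: dist_norm norm_minus_commute)
    then have "\<bar>t - a0 \<bullet> u\<bar> \<le> 1" by (simp add: inner_diff_left inner_add_left xu uu)
    then show ?thesis by linarith
  qed
  then show ?thesis by blast
qed

lemma ch_closed: "closed {t. x + t *\<^sub>R u \<in> KK}"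
proof -
  have "{t. x + t *\<^sub>R u \<in> KK} = (\<lambda>t. x + t *\<^sub>R u) -` KK" by auto
  moreover have "closed ((\<lambda>t. x + t *\<^sub>R u) -` KK)"
    by (rule continuous_closed_vimage[OF K_closed]) (intro continuous_intros)
  ultimately show ?thesis by simp
qed

context
  fixes x assumes x: "x \<in> proj_perp u ` KK"
begin

lemma ch_bdd_above: "bdd_above {t. x + t *\<^sub>R u \<in> KK}"
proof -
  obtain B where B: "\<forall>t. x + t *\<^sub>R u \<in> KK \<longrightarrow> \<bar>t\<bar> \<le> B" using ch_bdd[OF x] by blast
  have "\<forall>t\<in>{t. x + t *\<^sub>R u \<in> KK}. t \<le> B" using B by (auto simp: abs_le_iff)
  then show ?thesis unfolding bdd_above_def by blast
qed
lemma ch_bdd_below: "bdd_below {t. x + t *\<^sub>R u \<in> KK}"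
proof -
  obtain B where B: "\<forall>t. x + t *\<^sub>R u \<in> KK \<longrightarrow> \<bar>t\<bar> \<le> B" using ch_bdd[OF x] by blast
  have "\<forall>t\<in>{t. x + t *\<^sub>R u \<in> KK}. - B \<le> t" using B by (auto simp: abs_le_iff)
  then show ?thesis unfolding bdd_below_def by blast
qed
lemma ch_nonempty: "{t. x + t *\<^sub>R u \<in> KK} \<noteq> {}" using ch_ne[OF x] by auto

lemma hi_in: "x + chord_hi KK u x *\<^sub>R u \<in> KK"
  using closed_contains_Sup[OF ch_nonempty ch_bdd_above ch_closed] by (simp add: chord_hi_def)
lemma lo_in: "x + chord_lo KK u x *\<^sub>R u \<in> KK"
  using closed_contains_Inf[OF ch_nonempty ch_bdd_below ch_closed] by (simp add: chord_lo_def)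
lemma hi_ge: "x + t *\<^sub>R u \<in> KK \<Longrightarrow> t \<le> chord_hi KK u x"
  using cSup_upper[OF _ ch_bdd_above] by (simp add: chord_hi_def)
lemma lo_le: "x + t *\<^sub>R u \<in> KK \<Longrightarrow> chord_lo KK u x \<le> t"
  using cInf_lower[OF _ ch_bdd_below] by (simp add: chord_lo_def)
lemma lo_hi: "chord_lo KK u x \<le> chord_hi KK u x"
  using hi_ge[OF lo_in] .

lemma ch_int:
  assumes "chord_lo KK u x \<le> t" "t \<le> chord_hi KK u x"
  shows "x + t *\<^sub>R u \<in> KK"
proof (cases "chord_lo KK u x = chord_hi KK u x")
  case True
  then show ?thesis using assms lo_in by (metis order_antisym)
next
  case False
  define a where "a = chord_lo KK u x"
  define b where "b = chord_hi KK u x"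
  have ab: "a < b" using False lo_hi by (simp add: a_def b_def)
  define th where "th = (t - a) / (b - a)"
  have th0: "0 \<le> th" "th \<le> 1" using assms ab by (simp_all add: th_def a_def b_def field_simps)
  have "(1 - th) *\<^sub>R (x + a *\<^sub>R u) + th *\<^sub>R (x + b *\<^sub>R u) \<in> KK"
    using convexD[OF K_convex lo_in hi_in, of "1 - th" th] th0 by (simp add: a_def b_def)
  moreover have "(1 - th) *\<^sub>R (x + a *\<^sub>R u) + th *\<^sub>R (x + b *\<^sub>R u) = x + t *\<^sub>R u"
  proof -
    have h: "th * (b - a) = t - a" using ab by (simp add: th_def)
    have "(1 - th) * a + th * b = a + th * (b - a)" by (simp add: algebra_simps)
    also have "\<dots> = t" using h by simp
    finally have "(1 - th) * a + th * b = t" .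
    have "(1 - th) *\<^sub>R (x + a *\<^sub>R u) + th *\<^sub>R (x + b *\<^sub>R u) = ((1 - th) + th) *\<^sub>R x + ((1 - th) * a + th * b) *\<^sub>R u"
      by (simp only: scaleR_add_right scaleR_scaleR scaleR_add_left add_ac)
    then have "(1 - th) *\<^sub>R (x + a *\<^sub>R u) + th *\<^sub>R (x + b *\<^sub>R u) = x + ((1 - th) * a + th * b) *\<^sub>R u"
      by (simp only: diff_add_cancel scaleR_one)
    then show ?thesis using \<open>(1 - th) * a + th * b = t\<close> by simp
  qed
  ultimately show ?thesis by simp
qed

end

lemma HH_iff: "z \<in> HH \<longleftrightarrow> (\<exists>y\<in>KK. \<exists>t. z = proj_perp u y + t *\<^sub>R u \<and>
   \<bar>t\<bar> \<le> (chord_hi KK u (proj_perp u y) - chord_lo KK u (proj_perp u y)) / 2)"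
  unfolding steiner_sym_def by blast

lemma refl_norm: "norm (w - (2 * (w \<bullet> u)) *\<^sub>R u) = norm w"
proof -
  have "(norm (w - (2 * (w \<bullet> u)) *\<^sub>R u))\<^sup>2 = (norm w)\<^sup>2"
    by (simp add: power2_norm_eq_inner inner_diff_left inner_diff_right uu inner_commute algebra_simps)
  then show ?thesis by (simp add: power2_eq_iff_nonneg)
qed

lemma HS:
  assumes c1: "KK \<subseteq> cball c1 1" and c2: "KK \<subseteq> cball c2 1"
  shows "HH \<subseteq> cball ((1/2) *\<^sub>R (c1 + (c2 - (2 * (c2 \<bullet> u)) *\<^sub>R u))) 1"
proof
  fix z assume "z \<in> HH"
  then obtain y t where y: "y \<in> KK" and z: "z = proj_perp u y + t *\<^sub>R u"
    and t: "\<bar>t\<bar> \<le> (chord_hi KK u (proj_perp u y) - chord_lo KK u (proj_perp u y)) / 2"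
    unfolding HH_iff by blast
  define x where "x = proj_perp u y"
  have x: "x \<in> proj_perp u ` KK" using y by (simp add: x_def)
  have xu: "x \<bullet> u = 0" by (simp add: x_def proj_u)
  define lo where "lo = chord_lo KK u x"
  define hi where "hi = chord_hi KK u x"
  define t1 where "t1 = (hi + lo) / 2 + t"
  define t2 where "t2 = (hi + lo) / 2 - t"
  have t': "\<bar>t\<bar> \<le> (hi - lo) / 2" using t by (simp add: lo_def hi_def x_def)
  have tt: "- ((hi - lo) / 2) \<le> t" "t \<le> (hi - lo) / 2" using t' abs_le_iff[of t] by linarith+
  define M where "M = (hi + lo) / 2"
  define D where "D = (hi - lo) / 2"
  have m1: "M - D = lo" and m2: "M + D = hi" by (simp_all add: M_def D_def field_simps)
  have tt': "- D \<le> t" "t \<le> D" using tt by (simp_all add: D_def)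
  have "lo \<le> t1" "t1 \<le> hi" "lo \<le> t2" "t2 \<le> hi" unfolding t1_def t2_def M_def[symmetric]
    using tt' m1 m2 by linarith+
  then have Y1: "x + t1 *\<^sub>R u \<in> KK" and Y2: "x + t2 *\<^sub>R u \<in> KK"
    using ch_int[OF x] by (simp_all add: lo_def hi_def)
  define w1 where "w1 = x + t1 *\<^sub>R u - c1"
  define w2 where "w2 = x + t2 *\<^sub>R u - c2"
  have "x + t1 *\<^sub>R u \<in> cball c1 1" using Y1 c1 by blast
  then have n1: "norm w1 \<le> 1" by (simp add: w1_def dist_norm norm_minus_commute)
  have "x + t2 *\<^sub>R u \<in> cball c2 1" using Y2 c2 by blast
  then have n2: "norm w2 \<le> 1" by (simp add: w2_def dist_norm norm_minus_commute)
  have w2u: "w2 \<bullet> u = t2 - c2 \<bullet> u" by (simp add: w2_def inner_diff_left inner_add_left xu uu)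
  have eq: "z - (1/2) *\<^sub>R (c1 + (c2 - (2 * (c2 \<bullet> u)) *\<^sub>R u))
      = (1/2) *\<^sub>R (w1 + (w2 - (2 * (w2 \<bullet> u)) *\<^sub>R u))"
    unfolding w2u by (simp add: vec_eq_iff z x_def[symmetric] w1_def w2_def t1_def t2_def field_simps)
  have "norm (z - (1/2) *\<^sub>R (c1 + (c2 - (2 * (c2 \<bullet> u)) *\<^sub>R u))) \<le> (1/2) * (norm w1 + norm (w2 - (2 * (w2 \<bullet> u)) *\<^sub>R u))"
    unfolding eq using norm_triangle_ineq[of w1 "w2 - (2 * (w2 \<bullet> u)) *\<^sub>R u"] by simp
  also have "\<dots> \<le> 1" using n1 n2 refl_norm[of w2] by simp
  finally show "z \<in> cball ((1/2) *\<^sub>R (c1 + (c2 - (2 * (c2 \<bullet> u)) *\<^sub>R u))) 1"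
    by (simp add: dist_norm norm_minus_commute)
qed

lemma HH_refl: "z \<in> HH \<Longrightarrow> z - (2 * (z \<bullet> u)) *\<^sub>R u \<in> HH"
proof -
  assume "z \<in> HH"
  then obtain y t where y: "y \<in> KK" and z: "z = proj_perp u y + t *\<^sub>R u"
    and t: "\<bar>t\<bar> \<le> (chord_hi KK u (proj_perp u y) - chord_lo KK u (proj_perp u y)) / 2"
    unfolding HH_iff by blast
  have zu: "z \<bullet> u = t" unfolding z inner_add_left inner_scaleR_left proj_u uu by simp
  have "z - (2 * (z \<bullet> u)) *\<^sub>R u = proj_perp u y + (t *\<^sub>R u - (2 * t) *\<^sub>R u)"
    unfolding zu unfolding z by (simp only: add_diff_eq)
  also have "t *\<^sub>R u - (2 * t) *\<^sub>R u = (- t) *\<^sub>R u"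
    by (simp add: scaleR_left_diff_distrib[symmetric])
  finally have "z - (2 * (z \<bullet> u)) *\<^sub>R u = proj_perp u y + (- t) *\<^sub>R u" .
  then show ?thesis unfolding HH_iff
    by (intro bexI[OF _ y] exI[of _ "- t"]) (use t in simp)
qed

end

context stp begin

lemma SDL:
  assumes Q: "Q \<in> KK" and out: "\<forall>\<epsilon>>0. Q + \<epsilon> *\<^sub>R d \<notin> KK"
  shows "\<exists>n. norm n = 1 \<and> 0 \<le> n \<bullet> d \<and> KK \<subseteq> cball (Q - n) 1"
proof -
  define T where "T = {Q + \<epsilon> *\<^sub>R d | \<epsilon>. \<epsilon> > 0}"
  have cT: "convex T"
  proof (rule convexI)
    fix x y and a b :: real
    assume x: "x \<in> T" and y: "y \<in> T" and ab0: "0 \<le> a" "0 \<le> b" "a + b = 1"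
    then have ab: "0 \<le> a \<and> 0 \<le> b \<and> a + b = 1" by simp
    obtain e1 where e1: "e1 > 0" "x = Q + e1 *\<^sub>R d" using x by (auto simp: T_def)
    obtain e2 where e2: "e2 > 0" "y = Q + e2 *\<^sub>R d" using y by (auto simp: T_def)
    have "a *\<^sub>R x + b *\<^sub>R y = Q + (a * e1 + b * e2) *\<^sub>R d"
    proof -
      have "a *\<^sub>R x + b *\<^sub>R y = (a + b) *\<^sub>R Q + (a * e1 + b * e2) *\<^sub>R d"
        by (simp add: e1 e2 algebra_simps)
      then show ?thesis using ab by simp
    qed
    moreover have "a * e1 + b * e2 > 0"
    proof (cases "a = 0")
      case True then show ?thesis using ab e2 by simp
    next
      case False then have "a * e1 > 0" using ab e1 by simp
      moreover have "b * e2 \<ge> 0" using ab e2 by simp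
      ultimately show ?thesis by linarith
    qed
    ultimately show "a *\<^sub>R x + b *\<^sub>R y \<in> T" by (auto simp: T_def)
  qed
  have Tne: "T \<noteq> {}" by (auto simp: T_def intro!: exI[of _ 1])
  have disj: "KK \<inter> T = {}" using out by (auto simp: T_def)
  obtain a b where a0: "a \<noteq> 0" and aK: "\<forall>x\<in>KK. a \<bullet> x \<le> b" and aT: "\<forall>x\<in>T. b \<le> a \<bullet> x"
    using separating_hyperplane_sets[OF K_convex cT Kne Tne disj] by blast
  have Tmem: "Q + e *\<^sub>R d \<in> T" if "e > 0" for e using that by (auto simp: T_def)
  have aQ: "a \<bullet> Q \<le> b" using aK Q by blast
  have T1: "b \<le> a \<bullet> Q + e * (a \<bullet> d)" if "e > 0" for e
  proof -
    have "b \<le> a \<bullet> (Q + e *\<^sub>R d)" using aT Tmem[OF that] by blast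
    then show ?thesis by (simp add: inner_add_right)
  qed
  have ad: "0 \<le> a \<bullet> d" using T1[of 1] aQ by simp
  have bQ: "b \<le> a \<bullet> Q"
  proof (rule ccontr)
    assume nb: "\<not> b \<le> a \<bullet> Q"
    have adp: "a \<bullet> d > 0" using T1[of 1] nb ad by (cases "a \<bullet> d = 0") auto
    define e where "e = (b - a \<bullet> Q) / (2 * (a \<bullet> d))"
    have e0: "e > 0" using nb adp by (simp add: e_def)
    have "e * (a \<bullet> d) = (b - a \<bullet> Q) / 2" using adp by (simp add: e_def)
    then show False using T1[OF e0] nb by simp
  qed
  define n where "n = (1 / norm a) *\<^sub>R a"
  have na: "norm a > 0" using a0 by simp
  have n1: "norm n = 1" using na by (simp add: n_def)
  have nd: "0 \<le> n \<bullet> d" using ad na by (simp add: n_def)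
  have hp: "\<forall>k\<in>KK. (k - Q) \<bullet> n \<le> 0"
  proof
    fix k assume "k \<in> KK"
    then have "a \<bullet> k \<le> a \<bullet> Q" using aK bQ by force
    moreover have "(k - Q) \<bullet> a = k \<bullet> a - Q \<bullet> a" by (rule inner_diff_left)
    ultimately have "(k - Q) \<bullet> a \<le> 0" using inner_commute[of a k] inner_commute[of a Q] by linarith
    then show "(k - Q) \<bullet> n \<le> 0" using na by (simp add: n_def divide_nonpos_pos)
  qed
  have "KK \<subseteq> cball (Q - n) 1"
  proof
    fix k assume k: "k \<in> KK"
    have "dist k (Q - n) \<le> 1" using support_lemma[of Q A n k] Q n1 hp k by blast
    then show "k \<in> cball (Q - n) 1" by (simp add: dist_commute)
  qed
  then show ?thesis using n1 nd by blast
qed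

lemma endpoint:
  assumes p: "p \<notin> HH" and le: "\<forall>k\<in>KK. k \<bullet> v \<le> p \<bullet> v"
  shows "\<exists>c. HH \<subseteq> cball c 1 \<and> p \<notin> cball c 1"
proof -
  have cv: "continuous_on KK (\<lambda>k. k \<bullet> v)" by (intro continuous_intros)
  obtain Q where Q: "Q \<in> KK" "\<forall>k\<in>KK. k \<bullet> v \<le> Q \<bullet> v"
    using continuous_attains_sup[OF K_compact Kne cv] by blast
  have KQ: "KK \<subseteq> cball (Q - v) 1"
  proof
    fix k assume k: "k \<in> KK"
    have "\<forall>k\<in>KK. (k - Q) \<bullet> v \<le> 0" using Q by (simp add: inner_diff_left)
    then have "dist k (Q - v) \<le> 1" using support_lemma[of Q A v k] Q v1 k by blast
    then show "k \<in> cball (Q - v) 1" by (simp add: dist_commute)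
  qed
  define m where "m = (Q - v) - ((Q - v) \<bullet> u) *\<^sub>R u"
  have meq: "(1/2) *\<^sub>R ((Q - v) + ((Q - v) - (2 * ((Q - v) \<bullet> u)) *\<^sub>R u)) = m"
    by (simp add: m_def vec_eq_iff field_simps)
  have H: "HH \<subseteq> cball m 1" using HS[OF KQ KQ] by (simp only: meq)
  have mv: "m \<bullet> v = Q \<bullet> v - 1" by (simp add: m_def inner_diff_left uv vv)
  have mu: "m \<bullet> u = 0" by (simp add: m_def inner_diff_left uu vu)
  have Qp: "Q \<bullet> v \<le> p \<bullet> v" using le Q by blast
  show ?thesis
  proof (cases "Q \<bullet> v < p \<bullet> v \<or> p \<bullet> u \<noteq> 0")
    case True
    have "(dist m p)\<^sup>2 = (Q \<bullet> v - 1 - p \<bullet> v)\<^sup>2 + (p \<bullet> u)\<^sup>2" using dist_sq[of m p] mv mu by simp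
    also have "\<dots> > 1"
    proof (cases "Q \<bullet> v < p \<bullet> v")
      case True
      then have "1 < - (Q \<bullet> v - 1 - p \<bullet> v)" by simp
      then have "1 < (- (Q \<bullet> v - 1 - p \<bullet> v))\<^sup>2" by (rule one_less_power) simp
      then have "1 < (Q \<bullet> v - 1 - p \<bullet> v)\<^sup>2" by (simp only: power2_minus)
      then show ?thesis using zero_le_power2[of "p \<bullet> u"] by linarith
    next
      case False
      then have "Q \<bullet> v = p \<bullet> v" "p \<bullet> u \<noteq> 0" using Qp \<open>Q \<bullet> v < p \<bullet> v \<or> p \<bullet> u \<noteq> 0\<close> by auto
      then show ?thesis by simp
    qed
    finally have d2: "1 < (dist m p)\<^sup>2" .
    have "dist m p > 1"
    proof (rule ccontr)
      assume "\<not> dist m p > 1"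
      then have "dist m p \<le> 1" by simp
      then have "(dist m p)\<^sup>2 \<le> 1" by (simp add: power_le_one)
      then show False using d2 by simp
    qed
    then show ?thesis using H by (auto simp: mem_cball)
  next
    case False
    then have e: "p \<bullet> v = Q \<bullet> v" "p \<bullet> u = 0" using Qp by auto
    have "p = (p \<bullet> v) *\<^sub>R v + (p \<bullet> u) *\<^sub>R u" by (rule dec)
    also have "\<dots> = proj_perp u Q + 0 *\<^sub>R u" by (simp add: e proj_eq)
    finally have "p = proj_perp u Q + 0 *\<^sub>R u" .
    moreover have "\<bar>0::real\<bar> \<le> (chord_hi KK u (proj_perp u Q) - chord_lo KK u (proj_perp u Q)) / 2"
      using lo_hi[of "proj_perp u Q"] Q by simp
    ultimately have "p \<in> HH" unfolding HH_iff using Q by blast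
    then show ?thesis using p by blast
  qed
qed

end

context stp begin

lemma sq_le_imp: "(x::real)\<^sup>2 + y\<^sup>2 \<le> 1 \<Longrightarrow> \<bar>x\<bar> \<le> 1 \<and> y \<le> sqrt (1 - x\<^sup>2)"
proof -
  assume h: "x\<^sup>2 + y\<^sup>2 \<le> 1"
  have "x\<^sup>2 \<le> 1" using h zero_le_power2[of y] by linarith
  then have "\<bar>x\<bar> \<le> 1" by (simp add: abs_square_le_1)
  moreover have "y \<le> sqrt (1 - x\<^sup>2)" by (rule real_le_rsqrt) (use h in simp)
  ultimately show ?thesis by simp
qed

lemma dist_coords:
  assumes "c \<bullet> v = cv" "c \<bullet> u = cu"
  shows "(dist c k)\<^sup>2 = (k \<bullet> v - cv)\<^sup>2 + (k \<bullet> u - cu)\<^sup>2"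
proof -
  have "(dist c k)\<^sup>2 = (c \<bullet> v - k \<bullet> v)\<^sup>2 + (c \<bullet> u - k \<bullet> u)\<^sup>2" by (rule dist_sq)
  then show ?thesis by (simp add: assms power2_eq_square algebra_simps)
qed

lemma interior_up:
  assumes p: "p \<notin> HH" and k1: "k1 \<in> KK" "k1 \<bullet> v < p \<bullet> v" and k2: "k2 \<in> KK" "p \<bullet> v < k2 \<bullet> v"
    and t0: "0 \<le> p \<bullet> u"
  shows "\<exists>c. HH \<subseteq> cball c 1 \<and> p \<notin> cball c 1"
proof -
  define s0 where "s0 = p \<bullet> v"
  define t0 where "t0 = p \<bullet> u"
  define th where "th = (s0 - k1 \<bullet> v) / (k2 \<bullet> v - k1 \<bullet> v)"
  have th01: "0 \<le> th" "th \<le> 1" using k1 k2 by (simp_all add: th_def s0_def field_simps)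
  define k0 where "k0 = (1 - th) *\<^sub>R k1 + th *\<^sub>R k2"
  have k0K: "k0 \<in> KK" using convexD[OF K_convex k1(1) k2(1), of "1 - th" th] th01 by (simp add: k0_def)
  have k0v: "k0 \<bullet> v = s0"
  proof -
    have "k0 \<bullet> v = k1 \<bullet> v + th * (k2 \<bullet> v - k1 \<bullet> v)" by (simp add: k0_def inner_add_left algebra_simps)
    also have "\<dots> = s0" using k1 k2 by (simp add: th_def s0_def)
    finally show ?thesis .
  qed
  define x0 where "x0 = proj_perp u k0"
  have x0: "x0 \<in> proj_perp u ` KK" using k0K by (simp add: x0_def)
  have x0v: "x0 \<bullet> v = s0" by (simp add: x0_def proj_v k0v)
  have x0u: "x0 \<bullet> u = 0" by (simp add: x0_def proj_u)
  have "p = (p \<bullet> v) *\<^sub>R v + (p \<bullet> u) *\<^sub>R u" by (rule dec)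
  also have "\<dots> = x0 + t0 *\<^sub>R u" by (simp add: x0_def proj_eq k0v s0_def t0_def)
  finally have peq: "p = x0 + t0 *\<^sub>R u" .
  define b where "b = chord_hi KK u x0"
  define a where "a = chord_lo KK u x0"
  define h0 where "h0 = (b - a) / 2"
  have ab: "a \<le> b" using lo_hi[OF x0] by (simp add: a_def b_def)
  have t0h: "h0 < t0"
  proof (rule ccontr)
    assume "\<not> h0 < t0"
    then have "\<bar>t0\<bar> \<le> (chord_hi KK u (proj_perp u k0) - chord_lo KK u (proj_perp u k0)) / 2"
      using t0 by (simp add: t0_def h0_def a_def b_def x0_def)
    then have "p \<in> HH" unfolding HH_iff using k0K peq x0_def by blast
    then show False using p by blast
  qed
  define Q1 where "Q1 = x0 + b *\<^sub>R u"
  define Q2 where "Q2 = x0 + a *\<^sub>R u"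
  have Q1K: "Q1 \<in> KK" using hi_in[OF x0] by (simp add: Q1_def b_def)
  have Q2K: "Q2 \<in> KK" using lo_in[OF x0] by (simp add: Q2_def a_def)
  have out1: "\<forall>\<epsilon>>0. Q1 + \<epsilon> *\<^sub>R u \<notin> KK"
  proof (intro allI impI notI)
    fix e :: real assume e: "e > 0" "Q1 + e *\<^sub>R u \<in> KK"
    then have "x0 + (b + e) *\<^sub>R u \<in> KK" by (simp add: Q1_def algebra_simps)
    then have "b + e \<le> chord_hi KK u x0" by (rule hi_ge[OF x0])
    then show False using e by (simp add: b_def)
  qed
  have out2: "\<forall>\<epsilon>>0. Q2 + \<epsilon> *\<^sub>R (- u) \<notin> KK"
  proof (intro allI impI notI)
    fix e :: real assume e: "e > 0" "Q2 + e *\<^sub>R (- u) \<in> KK"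
    then have "x0 + (a - e) *\<^sub>R u \<in> KK" by (simp add: Q2_def algebra_simps)
    then have "chord_lo KK u x0 \<le> a - e" by (rule lo_le[OF x0])
    then show False using e by (simp add: a_def)
  qed
  obtain n1 where n1: "norm n1 = 1" "0 \<le> n1 \<bullet> u" "KK \<subseteq> cball (Q1 - n1) 1" using SDL[OF Q1K out1] by blast
  obtain n2 where n2: "norm n2 = 1" "0 \<le> n2 \<bullet> (- u)" "KK \<subseteq> cball (Q2 - n2) 1" using SDL[OF Q2K out2] by blast
  define \<alpha>1 where "\<alpha>1 = n1 \<bullet> v"
  define \<tau>1 where "\<tau>1 = n1 \<bullet> u"
  define \<alpha>2 where "\<alpha>2 = n2 \<bullet> v"
  define \<tau>2 where "\<tau>2 = - (n2 \<bullet> u)"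
  have nn1: "\<alpha>1\<^sup>2 + \<tau>1\<^sup>2 = 1" using nsq[of n1] n1 by (simp add: \<alpha>1_def \<tau>1_def)
  have nn2: "\<alpha>2\<^sup>2 + \<tau>2\<^sup>2 = 1" using nsq[of n2] n2 by (simp add: \<alpha>2_def \<tau>2_def)
  have \<tau>1p: "0 \<le> \<tau>1" using n1 by (simp add: \<tau>1_def)
  have \<tau>2p: "0 \<le> \<tau>2" using n2 by (simp add: \<tau>2_def)
  have D1: "(k \<bullet> v - s0 + \<alpha>1)\<^sup>2 + (k \<bullet> u - b + \<tau>1)\<^sup>2 \<le> 1" if "k \<in> KK" for k
  proof -
    have "k \<in> cball (Q1 - n1) 1" using that n1(3) by blast
    then have "dist (Q1 - n1) k \<le> 1" by simp
    then have le: "(dist (Q1 - n1) k)\<^sup>2 \<le> 1" by (simp add: power_le_one)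
    have cv: "(Q1 - n1) \<bullet> v = s0 - \<alpha>1" and cu: "(Q1 - n1) \<bullet> u = b - \<tau>1"
      by (simp_all add: Q1_def inner_diff_left inner_add_left x0v x0u uv uu \<alpha>1_def \<tau>1_def)
    have D: "(dist (Q1 - n1) k)\<^sup>2 = (k \<bullet> v - (s0 - \<alpha>1))\<^sup>2 + (k \<bullet> u - (b - \<tau>1))\<^sup>2"
      by (rule dist_coords[OF cv cu])
    have E1: "k \<bullet> v - (s0 - \<alpha>1) = k \<bullet> v - s0 + \<alpha>1" and E2: "k \<bullet> u - (b - \<tau>1) = k \<bullet> u - b + \<tau>1"
      by simp_all
    show ?thesis using le D unfolding E1 E2 by linarith
  qed
  have D2: "(k \<bullet> v - s0 + \<alpha>2)\<^sup>2 + (k \<bullet> u - a - \<tau>2)\<^sup>2 \<le> 1" if "k \<in> KK" for k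
  proof -
    have "k \<in> cball (Q2 - n2) 1" using that n2(3) by blast
    then have "dist (Q2 - n2) k \<le> 1" by simp
    then have le: "(dist (Q2 - n2) k)\<^sup>2 \<le> 1" by (simp add: power_le_one)
    have cv: "(Q2 - n2) \<bullet> v = s0 - \<alpha>2" and cu: "(Q2 - n2) \<bullet> u = a + \<tau>2"
      by (simp_all add: Q2_def inner_diff_left inner_add_left x0v x0u uv uu \<alpha>2_def \<tau>2_def)
    have D: "(dist (Q2 - n2) k)\<^sup>2 = (k \<bullet> v - (s0 - \<alpha>2))\<^sup>2 + (k \<bullet> u - (a + \<tau>2))\<^sup>2"
      by (rule dist_coords[OF cv cu])
    have E1: "k \<bullet> v - (s0 - \<alpha>2) = k \<bullet> v - s0 + \<alpha>2" and E2: "k \<bullet> u - (a + \<tau>2) = k \<bullet> u - a - \<tau>2"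
      by simp_all
    show ?thesis using le D unfolding E1 E2 by linarith
  qed
  have side: "\<tau> > 0" if nn: "\<alpha>\<^sup>2 + \<tau>\<^sup>2 = 1" and tp: "0 \<le> \<tau>"
    and D: "\<And>k. k \<in> KK \<Longrightarrow> (k \<bullet> v - s0 + \<alpha>)\<^sup>2 \<le> 1" for \<alpha> \<tau>
  proof (rule ccontr)
    assume "\<not> \<tau> > 0"
    then have "\<tau> = 0" using tp by simp
    then have "\<alpha>\<^sup>2 = 1" using nn by simp
    then have "\<alpha> = 1 \<or> \<alpha> = -1" by (simp add: power2_eq_1_iff)
    then show False
    proof
      assume "\<alpha> = 1"
      then have "1 < k2 \<bullet> v - s0 + \<alpha>" using k2 by (simp add: s0_def)
      then have "1 < (k2 \<bullet> v - s0 + \<alpha>)\<^sup>2" by (rule one_less_power) simp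
      then show False using D[OF k2(1)] by simp
    next
      assume "\<alpha> = -1"
      then have "k1 \<bullet> v - s0 + \<alpha> < -1" using k1 by (simp add: s0_def)
      then have "1 < - (k1 \<bullet> v - s0 + \<alpha>)" by simp
      then have "1 < (- (k1 \<bullet> v - s0 + \<alpha>))\<^sup>2" by (rule one_less_power) simp
      then have "1 < (k1 \<bullet> v - s0 + \<alpha>)\<^sup>2" by (simp only: power2_minus)
      then show False using D[OF k1(1)] by simp
    qed
  qed
  have D1': "(k \<bullet> v - s0 + \<alpha>1)\<^sup>2 \<le> 1" if "k \<in> KK" for k
    using D1[OF that] zero_le_power2[of "k \<bullet> u - b + \<tau>1"] by linarith
  have D2': "(k \<bullet> v - s0 + \<alpha>2)\<^sup>2 \<le> 1" if "k \<in> KK" for k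
    using D2[OF that] zero_le_power2[of "k \<bullet> u - a - \<tau>2"] by linarith
  have \<tau>1pos: "\<tau>1 > 0" by (rule side[OF nn1 \<tau>1p D1'])
  have \<tau>2pos: "\<tau>2 > 0" by (rule side[OF nn2 \<tau>2p D2'])
  have "\<alpha>1\<^sup>2 < 1" using nn1 \<tau>1pos zero_less_power2[of \<tau>1] by linarith
  then have a1: "\<bar>\<alpha>1\<bar> < 1" using abs_square_less_1 by blast
  have "\<alpha>2\<^sup>2 < 1" using nn2 \<tau>2pos zero_less_power2[of \<tau>2] by linarith
  then have a2: "\<bar>\<alpha>2\<bar> < 1" using abs_square_less_1 by blast
  have w1: "ww \<alpha>1 = \<tau>1"
  proof -
    have "1 - \<alpha>1\<^sup>2 = \<tau>1\<^sup>2" using nn1 by simp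
    then show ?thesis using \<tau>1p by (simp add: ww_def)
  qed
  have w2: "ww \<alpha>2 = \<tau>2"
  proof -
    have "1 - \<alpha>2\<^sup>2 = \<tau>2\<^sup>2" using nn2 by simp
    then show ?thesis using \<tau>2p by (simp add: ww_def)
  qed
  have Q1v: "Q1 \<bullet> v = s0" and Q1u: "Q1 \<bullet> u = b" by (simp_all add: Q1_def inner_add_left x0v x0u uv uu)
  have Q2v: "Q2 \<bullet> v = s0" and Q2u: "Q2 \<bullet> u = a" by (simp_all add: Q2_def inner_add_left x0v x0u uv uu)
  have bd1: "b - a \<le> 2 * \<tau>1"
  proof -
    have "\<alpha>1\<^sup>2 + (a - b + \<tau>1)\<^sup>2 \<le> 1" using D1[OF Q2K] by (simp add: Q2v Q2u)
    then have "(a - b + \<tau>1)\<^sup>2 \<le> \<tau>1\<^sup>2" using nn1 by simp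
    then have "\<bar>a - b + \<tau>1\<bar> \<le> \<bar>\<tau>1\<bar>" by (simp add: abs_le_square_iff)
    then show ?thesis using \<tau>1p by simp
  qed
  have bd2: "b - a \<le> 2 * \<tau>2"
  proof -
    have "\<alpha>2\<^sup>2 + (b - a - \<tau>2)\<^sup>2 \<le> 1" using D2[OF Q1K] by (simp add: Q1v Q1u)
    then have "(b - a - \<tau>2)\<^sup>2 \<le> \<tau>2\<^sup>2" using nn2 by simp
    then have "\<bar>b - a - \<tau>2\<bar> \<le> \<bar>\<tau>2\<bar>" by (simp add: abs_le_square_iff)
    then show ?thesis using \<tau>2p by simp
  qed
  define \<gamma> where "\<gamma> = GG ((FF \<alpha>1 + FF \<alpha>2) / 2)"
  have g1: "\<bar>\<gamma>\<bar> < 1" using GG_bound by (simp add: \<gamma>_def)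
  have "\<gamma>\<^sup>2 < 1" using g1 abs_square_less_1 by blast
  then have g2: "\<gamma>\<^sup>2 \<le> 1" by (rule less_imp_le)
  have wg2: "(ww \<gamma>)\<^sup>2 = 1 - \<gamma>\<^sup>2" unfolding ww_def by (rule real_sqrt_pow2) (use g2 in linarith)
  have wg0: "0 \<le> ww \<gamma>" unfolding ww_def by (rule real_sqrt_ge_zero) (use g2 in linarith)
  have h0w: "h0 \<le> ww \<gamma>"
    using ww_gamma_ge[OF a1 a2] w1 w2 bd1 bd2 by (simp add: \<gamma>_def h0_def min_def split: if_splits)
  define c where "c = (s0 - \<gamma>) *\<^sub>R v + (h0 - ww \<gamma>) *\<^sub>R u"
  have cv: "c \<bullet> v = s0 - \<gamma>" and cu: "c \<bullet> u = h0 - ww \<gamma>"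
    by (simp_all add: c_def inner_add_left vv uv vu uu)
  have HHc: "HH \<subseteq> cball c 1"
  proof
    fix z assume "z \<in> HH"
    then obtain y t where y: "y \<in> KK" and z: "z = proj_perp u y + t *\<^sub>R u"
      and t: "\<bar>t\<bar> \<le> (chord_hi KK u (proj_perp u y) - chord_lo KK u (proj_perp u y)) / 2"
      unfolding HH_iff by blast
    define x where "x = proj_perp u y"
    have x: "x \<in> proj_perp u ` KK" using y by (simp add: x_def)
    define X where "X = y \<bullet> v - s0"
    have xv: "x \<bullet> v = y \<bullet> v" and xu: "x \<bullet> u = 0" by (simp_all add: x_def proj_v proj_u)
    define hi where "hi = chord_hi KK u x"
    define lo where "lo = chord_lo KK u x"
    have P1: "x + hi *\<^sub>R u \<in> KK" using hi_in[OF x] by (simp add: hi_def)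
    have P2: "x + lo *\<^sub>R u \<in> KK" using lo_in[OF x] by (simp add: lo_def)
    have E1: "(X + \<alpha>1)\<^sup>2 + (hi - b + \<tau>1)\<^sup>2 \<le> 1"
      using D1[OF P1] by (simp add: inner_add_left xv xu uv uu X_def)
    have E2: "(X + \<alpha>2)\<^sup>2 + (a + \<tau>2 - lo)\<^sup>2 \<le> 1"
      using D2[OF P2] by (simp add: inner_add_left xv xu uv uu X_def power2_commute algebra_simps)
    have F1: "\<bar>X + \<alpha>1\<bar> \<le> 1" "hi - b + \<tau>1 \<le> ww (X + \<alpha>1)" using sq_le_imp[OF E1] by (simp_all add: ww_def)
    have F2: "\<bar>X + \<alpha>2\<bar> \<le> 1" "a + \<tau>2 - lo \<le> ww (X + \<alpha>2)" using sq_le_imp[OF E2] by (simp_all add: ww_def)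
    have T1: "\<bar>X + \<gamma>\<bar> \<le> 1" using tangent_ineq(1)[OF a1 a2 F1(1) F2(1)] by (simp add: \<gamma>_def)
    have T2: "(ww (X + \<alpha>1) + ww (X + \<alpha>2)) / 2 - (ww \<alpha>1 + ww \<alpha>2) / 2 \<le> ww (X + \<gamma>) - ww \<gamma>"
      using tangent_ineq(2)[OF a1 a2 F1(1) F2(1)] by (simp add: \<gamma>_def)
    have hl: "(hi - lo) / 2 \<le> h0 + ww (X + \<gamma>) - ww \<gamma>"
    proof -
      have T2': "(ww (X + \<alpha>1) + ww (X + \<alpha>2)) / 2 - (\<tau>1 + \<tau>2) / 2 \<le> ww (X + \<gamma>) - ww \<gamma>"
        using T2 unfolding w1 w2 .
      show ?thesis unfolding h0_def using F1(2) F2(2) T2' by argo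
    qed
    have tt: "\<bar>t\<bar> \<le> (hi - lo) / 2" using t by (simp add: hi_def lo_def x_def)
    have tc: "\<bar>t - (h0 - ww \<gamma>)\<bar> \<le> ww (X + \<gamma>)"
    proof -
      have "t \<le> (hi - lo) / 2" "- t \<le> (hi - lo) / 2" using tt abs_le_iff[of t] by argo+
      then show ?thesis using hl h0w abs_le_iff[of "t - (h0 - ww \<gamma>)"] by argo
    qed
    have wX: "(ww (X + \<gamma>))\<^sup>2 = 1 - (X + \<gamma>)\<^sup>2"
      using T1 by (simp add: ww_def abs_square_le_1)
    have "(X + \<gamma>)\<^sup>2 \<le> 1" using T1 abs_square_le_1 by blast
    then have wXn: "0 \<le> ww (X + \<gamma>)" unfolding ww_def by (intro real_sqrt_ge_zero) linarith
    have "\<bar>t - (h0 - ww \<gamma>)\<bar> \<le> \<bar>ww (X + \<gamma>)\<bar>" using tc wXn by simp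
    then have "(t - (h0 - ww \<gamma>))\<^sup>2 \<le> (ww (X + \<gamma>))\<^sup>2" by (simp only: abs_le_square_iff)
    then have tc2: "(t - (h0 - ww \<gamma>))\<^sup>2 \<le> 1 - (X + \<gamma>)\<^sup>2" using wX by simp
    have zv: "z \<bullet> v = y \<bullet> v" and zu: "z \<bullet> u = t"
      by (simp_all add: z x_def[symmetric] inner_add_left xv xu uv uu)
    have dz: "(dist c z)\<^sup>2 = (z \<bullet> v - (s0 - \<gamma>))\<^sup>2 + (z \<bullet> u - (h0 - ww \<gamma>))\<^sup>2"
      by (rule dist_coords[OF cv cu])
    have e: "z \<bullet> v - (s0 - \<gamma>) = X + \<gamma>" using zv by (simp add: X_def)
    have "(dist c z)\<^sup>2 = (X + \<gamma>)\<^sup>2 + (t - (h0 - ww \<gamma>))\<^sup>2" using dz unfolding e zu .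
    then have "(dist c z)\<^sup>2 \<le> 1\<^sup>2" using tc2 by simp
    then have "dist c z \<le> 1" using power2_le_imp_le[of "dist c z" 1] by simp
    then show "z \<in> cball c 1" by simp
  qed
  have dp: "(dist c p)\<^sup>2 = (p \<bullet> v - (s0 - \<gamma>))\<^sup>2 + (p \<bullet> u - (h0 - ww \<gamma>))\<^sup>2"
    by (rule dist_coords[OF cv cu])
  have "(dist c p)\<^sup>2 = \<gamma>\<^sup>2 + (t0 - (h0 - ww \<gamma>))\<^sup>2" using dp by (simp add: s0_def t0_def)
  also have "\<dots> > \<gamma>\<^sup>2 + (ww \<gamma>)\<^sup>2"
  proof -
    have "ww \<gamma> < t0 - (h0 - ww \<gamma>)" using t0h by simp
    then have "(ww \<gamma>)\<^sup>2 < (t0 - (h0 - ww \<gamma>))\<^sup>2" using wg0 by (simp add: power_strict_mono)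
    then show ?thesis by simp
  qed
  also have "\<gamma>\<^sup>2 + (ww \<gamma>)\<^sup>2 = 1" using wg2 by simp
  finally have d2: "1 < (dist c p)\<^sup>2" .
  have "dist c p > 1"
  proof (rule ccontr)
    assume "\<not> dist c p > 1"
    then have "dist c p \<le> 1" by simp
    then have "(dist c p)\<^sup>2 \<le> 1" by (simp add: power_le_one)
    then show False using d2 by simp
  qed
  then show ?thesis using HHc by (auto simp: mem_cball)
qed

end

context stp begin

lemma refl_dist: "dist (w1 - (2 * (w1 \<bullet> u)) *\<^sub>R u) (w2 - (2 * (w2 \<bullet> u)) *\<^sub>R u) = dist w1 w2"
proof -
  have eq: "w1 - (2 * (w1 \<bullet> u)) *\<^sub>R u - (w2 - (2 * (w2 \<bullet> u)) *\<^sub>R u)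
      = (w1 - w2) - (2 * ((w1 - w2) \<bullet> u)) *\<^sub>R u"
    by (simp add: vec_eq_iff inner_diff_left algebra_simps)
  show ?thesis by (simp only: dist_norm eq refl_norm)
qed

lemma interior:
  assumes p: "p \<notin> HH" and k1: "k1 \<in> KK" "k1 \<bullet> v < p \<bullet> v" and k2: "k2 \<in> KK" "p \<bullet> v < k2 \<bullet> v"
  shows "\<exists>c. HH \<subseteq> cball c 1 \<and> p \<notin> cball c 1"
proof (cases "0 \<le> p \<bullet> u")
  case True
  then show ?thesis using interior_up[OF p k1 k2] by blast
next
  case False
  define p' where "p' = p - (2 * (p \<bullet> u)) *\<^sub>R u"
  have p'u: "p' \<bullet> u = - (p \<bullet> u)" by (simp add: p'_def inner_diff_left uu)
  have p'v: "p' \<bullet> v = p \<bullet> v" by (simp add: p'_def inner_diff_left uv)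
  have pback: "p' - (2 * (p' \<bullet> u)) *\<^sub>R u = p" unfolding p'u by (simp add: p'_def vec_eq_iff algebra_simps)
  have p': "p' \<notin> HH"
  proof
    assume "p' \<in> HH"
    then have "p' - (2 * (p' \<bullet> u)) *\<^sub>R u \<in> HH" by (rule HH_refl)
    then show False using p pback by simp
  qed
  obtain c' where c': "HH \<subseteq> cball c' 1" "p' \<notin> cball c' 1"
    using interior_up[OF p' k1(1) _ k2(1)] k1 k2 p'u p'v False by auto
  define c where "c = c' - (2 * (c' \<bullet> u)) *\<^sub>R u"
  have "HH \<subseteq> cball c 1"
  proof
    fix z assume z: "z \<in> HH"
    define zr where "zr = z - (2 * (z \<bullet> u)) *\<^sub>R u"
    have "zr \<in> HH" unfolding zr_def using z by (rule HH_refl)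
    then have d1: "dist c' zr \<le> 1" using c' by auto
    have zb: "zr - (2 * (zr \<bullet> u)) *\<^sub>R u = z"
      by (simp add: zr_def vec_eq_iff inner_diff_left uu algebra_simps)
    have "dist c z = dist c' zr" using refl_dist[of c' zr] unfolding zb c_def[symmetric] .
    then have "dist c z \<le> 1" using d1 by simp
    then show "z \<in> cball c 1" by simp
  qed
  moreover have "p \<notin> cball c 1"
  proof -
    have "dist c p = dist c' p'" using refl_dist[of c' p'] unfolding pback c_def[symmetric] .
    then show ?thesis using c' by simp
  qed
  ultimately show ?thesis by blast
qed

lemma separation:
  assumes p: "p \<notin> HH"
  shows "\<exists>c. HH \<subseteq> cball c 1 \<and> p \<notin> cball c 1"
proof -
  interpret m: stp A u "- v"
  proof unfold_locales
    fix y :: "real^2"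
    have e: "(y \<bullet> - v) *\<^sub>R - v = (y \<bullet> v) *\<^sub>R v" by simp
    show "y = (y \<bullet> - v) *\<^sub>R - v + (y \<bullet> u) *\<^sub>R u" unfolding e by (rule dec)
  qed (simp_all add: Ane u1 v1 vu Kne)
  show ?thesis
  proof (cases "\<forall>k\<in>KK. k \<bullet> v \<le> p \<bullet> v")
    case True then show ?thesis using endpoint[OF p] by blast
  next
    case False
    then obtain k2 where k2: "k2 \<in> KK" "p \<bullet> v < k2 \<bullet> v" by force
    show ?thesis
    proof (cases "\<forall>k\<in>KK. k \<bullet> (- v) \<le> p \<bullet> (- v)")
      case True then show ?thesis using m.endpoint[OF p] by blast
    next
      case False
      then obtain k1 where k1: "k1 \<in> KK" "k1 \<bullet> v < p \<bullet> v" by force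
      show ?thesis using interior[OF p k1 k2] .
    qed
  qed
qed

end

theorem theorem5p12:
  fixes K :: "(real^2) set" and u :: "real^2"
  assumes "K \<in> S2" and "K \<noteq> {}" and "K \<noteq> UNIV"
    and "norm u = 1"
  shows "steiner_sym u K \<in> S2"
proof -
  obtain A where KA: "K = (\<Inter>x\<in>A. cball x 1)" using assms(1) by (auto simp: S2_def)
  have Ane: "A \<noteq> {}" using assms(3) KA by auto
  obtain v where v: "v \<bullet> u = 0" "norm v = 1" "\<And>y. y = (y \<bullet> v) *\<^sub>R v + (y \<bullet> u) *\<^sub>R u"
    using perp_basis[OF assms(4)] by blast
  have Kne': "(\<Inter>x\<in>A. cball x 1) \<noteq> {}" using assms(2) KA by simp
  interpret stp A u v
  proof unfold_locales
    fix y :: "real^2"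
    show "y = (y \<bullet> v) *\<^sub>R v + (y \<bullet> u) *\<^sub>R u" by (rule v(3))
  qed (simp_all add: Ane assms(4) v(1) v(2) Kne')
  have "steiner_sym u K = (\<Inter>c\<in>{c. steiner_sym u K \<subseteq> cball c 1}. cball c 1)"
  proof
    show "steiner_sym u K \<subseteq> (\<Inter>c\<in>{c. steiner_sym u K \<subseteq> cball c 1}. cball c 1)" by blast
    show "(\<Inter>c\<in>{c. steiner_sym u K \<subseteq> cball c 1}. cball c 1) \<subseteq> steiner_sym u K"
    proof
      fix p assume p: "p \<in> (\<Inter>c\<in>{c. steiner_sym u K \<subseteq> cball c 1}. cball c 1)"
      show "p \<in> steiner_sym u K"
      proof (rule ccontr)
        assume "p \<notin> steiner_sym u K"
        then obtain c where "steiner_sym u K \<subseteq> cball c 1" "p \<notin> cball c 1"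
          using separation[of p] KA by blast
        then show False using p by blast
      qed
    qed
  qed
  then show ?thesis unfolding S2_def by blast
qed

end
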